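(* Let $K=\mathbb{Z}/3$, let $G$ be a simple graph with edges $e_1,\dots,e_s$ ($s\ge1$), and let $X$, $C_X(d)$ be as in the context. For each integer $d$, let $\mathcal{B}_d$ be the set of monomials of $S$ of degree $d$ not divisible by the leading term (for the graded reverse lexicographic order with $t_1>\dots>t_s$) of any polynomial in the ideal $(I(X),t_s^2)$, with $\mathcal{B}_d=\emptyset$ for $d<0$, and let $\beta(d)=|\mathcal{B}_d|$. Then for every $d\ge0$, $$\dim_K C_X(d)=\sum_{i\ge0}\beta(d-2i).$$
   Context: Let $G$ be a simple graph with vertex set $\{1,\dots,n\}$ and a fixed ordering $e_1,\dots,e_s$ of its edges; edge $e_k$ is identified with the variable $t_k$ of $S=K[t_1,\dots,t_s]$, $K$ a finite field. Let $X\subseteq\mathbb{P}^{s-1}$ be the image of the projective torus $\{(x_1:\dots:x_n): x_i\neq0\}\subseteq\mathbb{P}^{n-1}$ under the map whose $k$-th coordinate is $x_ix_j$ when $e_k=\{i,j\}$. Order $X=\{P_1,\dots,P_m\}$. For $d\ge0$ the parameterized code of order $d$, $C_X(d)\subseteq K^m$, is the image of the space $S_d$ of homogeneous polynomials of degree $d$ under $f\mapsto \big(f(P_1)/f_0(P_1),\dots,f(P_m)/f_0(P_m)\big)$ with $f_0=t_1^d$. $I(X)\subseteq S$ is the ideal generated by homogeneous polynomials vanishing on $X$. *)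

theory Defs
  imports Main "HOL.Vector_Spaces" "HOL-Library.Poly_Mapping" "HOL-Library.Function_Algebras"
begin

text \<open>Multivariate polynomials over a field 'a in variables indexed by nat:
  elements of (nat =>0 nat) =>0 'a (monomials are exponent vectors).
  Variable t_(k+1) of the paper is index k here (k < s).\<close>

type_synonym monom = "nat \<Rightarrow>\<^sub>0 nat"
type_synonym 'a mpoly = "monom \<Rightarrow>\<^sub>0 'a"

definition mdeg :: "monom \<Rightarrow> nat" where
  "mdeg m = (\<Sum>i\<in>Poly_Mapping.keys m. Poly_Mapping.lookup m i)"

definition mdvd :: "monom \<Rightarrow> monom \<Rightarrow> bool" where
  "mdvd a b \<longleftrightarrow> (\<forall>i. Poly_Mapping.lookup a i \<le> Poly_Mapping.lookup b i)"

definition Sring :: "nat \<Rightarrow> ('a::zero) mpoly set" where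
  "Sring s = {f. \<forall>m\<in>Poly_Mapping.keys f. Poly_Mapping.keys m \<subseteq> {..<s}}"

definition Shom :: "nat \<Rightarrow> nat \<Rightarrow> ('a::zero) mpoly set" where
  "Shom s d = {f \<in> Sring s. \<forall>m\<in>Poly_Mapping.keys f. mdeg m = d}"

definition mpeval :: "('a::comm_ring_1) mpoly \<Rightarrow> (nat \<Rightarrow> 'a) \<Rightarrow> 'a" where
  "mpeval f v = (\<Sum>m\<in>Poly_Mapping.keys f. Poly_Mapping.lookup f m * (\<Prod>i\<in>Poly_Mapping.keys m. v i ^ Poly_Mapping.lookup m i))"

definition ideal_gen :: "nat \<Rightarrow> ('a::comm_ring_1) mpoly set \<Rightarrow> 'a mpoly set" where
  "ideal_gen s A = {f. \<exists>F c. finite F \<and> F \<subseteq> A \<and> (\<forall>g\<in>F. c g \<in> Sring s)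
                              \<and> f = (\<Sum>g\<in>F. c g * g)}"

text \<open>Graded reverse lexicographic order with t_1 > ... > t_s (index 0 largest):
  a < b iff deg a < deg b, or degrees equal and the last variable in which they
  differ has larger exponent in a.\<close>
definition grevlex_less :: "monom \<Rightarrow> monom \<Rightarrow> bool" where
  "grevlex_less a b \<longleftrightarrow> mdeg a < mdeg b \<or>
     (mdeg a = mdeg b \<and> (\<exists>i. Poly_Mapping.lookup b i < Poly_Mapping.lookup a i \<and> (\<forall>j>i. Poly_Mapping.lookup a j = Poly_Mapping.lookup b j)))"

definition lead_monom :: "('a::zero) mpoly \<Rightarrow> monom" where
  "lead_monom f = (THE m. m \<in> Poly_Mapping.keys f \<and> (\<forall>m'\<in>Poly_Mapping.keys f. m' \<noteq> m \<longrightarrow> grevlex_less m' m))"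

text \<open>Projective point of P^(s-1) represented by a nonzero vector v: its class of nonzero multiples.\<close>
definition proj_pt :: "(nat \<Rightarrow> 'a::field) \<Rightarrow> (nat \<Rightarrow> 'a) set" where
  "proj_pt v = {(\<lambda>k. c * v k) | c. c \<noteq> 0}"

text \<open>A graph on vertices {1..n} given by its ordered list of edges es (edge e_(k+1) = es ! k).\<close>
definition simple_graph :: "nat \<Rightarrow> nat set list \<Rightarrow> bool" where
  "simple_graph n es \<longleftrightarrow> distinct es \<and> (\<forall>e\<in>set es. card e = 2 \<and> e \<subseteq> {1..n})"

definition edge_map :: "nat set list \<Rightarrow> (nat \<Rightarrow> 'a::field) \<Rightarrow> nat \<Rightarrow> 'a" where
  "edge_map es x = (\<lambda>k. if k < length es then (\<Prod>i\<in>es ! k. x i) else 0)"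

definition torus_X :: "nat \<Rightarrow> nat set list \<Rightarrow> (nat \<Rightarrow> 'a::field) set set" where
  "torus_X n es = {proj_pt (edge_map es x) | x. \<forall>i\<in>{1..n}. x i \<noteq> 0}"

definition rep :: "(nat \<Rightarrow> 'a) set \<Rightarrow> nat \<Rightarrow> 'a" where
  "rep P = (SOME v. v \<in> P)"

text \<open>Parameterized code C_X(d) as a subspace of K^X (functions X -> K, zero off X),
  f |-> (f(P)/t_1^d(P))_P.\<close>
definition param_code :: "nat \<Rightarrow> nat set list \<Rightarrow> nat \<Rightarrow> ((nat \<Rightarrow> 'a::field) set \<Rightarrow> 'a) set" where
  "param_code n es d = {(\<lambda>P. if P \<in> torus_X n es then mpeval f (rep P) / (rep P 0) ^ d else 0)
                        | f. f \<in> Shom (length es) d}"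

definition vanishing_ideal :: "nat \<Rightarrow> nat set list \<Rightarrow> ('a::field) mpoly set" where
  "vanishing_ideal n es = ideal_gen (length es)
     {f. \<exists>d. f \<in> Shom (length es) d \<and> (\<forall>P\<in>torus_X n es. \<forall>v\<in>P. mpeval f v = 0)}"

definition IXts2 :: "nat \<Rightarrow> nat set list \<Rightarrow> ('a::field) mpoly set" where
  "IXts2 n es = ideal_gen (length es)
     (vanishing_ideal n es \<union> {Poly_Mapping.single (Poly_Mapping.single (length es - 1) 2) 1})"

definition std_monoms :: "nat \<Rightarrow> nat set list \<Rightarrow> nat \<Rightarrow> ('a::field) itself \<Rightarrow> monom set" where
  "std_monoms n es d _ = {m. Poly_Mapping.keys m \<subseteq> {..<length es} \<and> mdeg m = d \<and>
      (\<forall>f\<in>(IXts2 n es :: 'a mpoly set). f \<noteq> 0 \<longrightarrow> \<not> mdvd (lead_monom f) m)}"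

definition beta :: "nat \<Rightarrow> nat set list \<Rightarrow> ('a::field) itself \<Rightarrow> nat \<Rightarrow> nat" where
  "beta n es T d = card (std_monoms n es d T)"

definition fdim :: "('b \<Rightarrow> 'a::field) set \<Rightarrow> nat" where
  "fdim C = vector_space.dim (\<lambda>c f x. c * f x) C"

end

theory Submission
  imports Defs "HOL-Library.FuncSet"
begin


abbreviation lk where "lk \<equiv> Poly_Mapping.lookup"
abbreviation ks where "ks \<equiv> Poly_Mapping.keys"

lemma mdeg_superset:
  assumes "finite A" "ks m \<subseteq> A"
  shows "mdeg m = (\<Sum>i\<in>A. lk m i)"
  unfolding mdeg_def using assms
  by (intro sum.mono_neutral_left) (auto simp: in_keys_iff)

lemma keys_add_nat: "ks (a + b :: monom) = ks a \<union> ks b"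
  by (auto simp: in_keys_iff lookup_add)

lemma mdeg_add: "mdeg (a + b) = mdeg a + mdeg b"
proof -
  have "mdeg (a+b) = (\<Sum>i\<in>ks a \<union> ks b. lk (a+b) i)"
    by (rule mdeg_superset) (auto simp: keys_add_nat)
  also have "\<dots> = (\<Sum>i\<in>ks a \<union> ks b. lk a i) + (\<Sum>i\<in>ks a \<union> ks b. lk b i)"
    by (simp add: lookup_add sum.distrib)
  also have "\<dots> = mdeg a + mdeg b"
    by (simp add: mdeg_superset[symmetric])
  finally show ?thesis .
qed

lemma lookup_le_mdeg: "lk m i \<le> mdeg m"
proof (cases "i \<in> ks m")
  case True
  then show ?thesis unfolding mdeg_def by (intro member_le_sum) auto
next
  case False
  then show ?thesis by (simp add: in_keys_iff)
qed

lemma mdeg_single: "mdeg (Poly_Mapping.single i k) = k"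
  unfolding mdeg_def by auto

lemma mdeg_zero[simp]: "mdeg 0 = 0"
  unfolding mdeg_def by auto

lemma gl_irrefl: "\<not> grevlex_less a a"
  unfolding grevlex_less_def by auto

lemma gl_asym: "grevlex_less a b \<Longrightarrow> \<not> grevlex_less b a"
proof
  assume ab: "grevlex_less a b" and ba: "grevlex_less b a"
  then have deq: "mdeg a = mdeg b" unfolding grevlex_less_def by auto
  then obtain i where i: "lk b i < lk a i" "\<forall>j>i. lk a j = lk b j"
    using ab unfolding grevlex_less_def by auto
  obtain j where j: "lk a j < lk b j" "\<forall>k>j. lk b k = lk a k"
    using ba deq unfolding grevlex_less_def by auto
  show False
  proof (cases i j rule: linorder_cases)
    case less
    then show False using i j by fastforce
  next
    case equal
    then show False using i j by simp
  next
    case greater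
    then show False using i j by fastforce
  qed
qed

lemma gl_trans:
  assumes ab: "grevlex_less a b" and bc: "grevlex_less b c"
  shows "grevlex_less a c"
proof -
  have eqc: ?thesis if h1: "mdeg a = mdeg b" and h2: "mdeg b = mdeg c"
  proof -
    obtain i where i: "lk b i < lk a i" "\<forall>j>i. lk a j = lk b j"
      using ab h1 unfolding grevlex_less_def by auto
    obtain j where j: "lk c j < lk b j" "\<forall>k>j. lk b k = lk c k"
      using bc h2 unfolding grevlex_less_def by auto
    have "\<exists>k. lk c k < lk a k \<and> (\<forall>l>k. lk a l = lk c l)"
    proof (cases i j rule: linorder_cases)
      case less
      then show ?thesis using i j by (intro exI[of _ j]) auto
    next
      case equal
      then show ?thesis using i j by (intro exI[of _ j]) auto
    next
      case greater
      then show ?thesis using i j by (intro exI[of _ i]) auto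
    qed
    then show ?thesis using h1 h2 unfolding grevlex_less_def by auto
  qed
  show ?thesis
  proof (cases "mdeg a = mdeg b \<and> mdeg b = mdeg c")
    case True
    then show ?thesis using eqc by blast
  next
    case False
    then have "mdeg a < mdeg c" using ab bc unfolding grevlex_less_def by auto
    then show ?thesis unfolding grevlex_less_def by auto
  qed
qed

lemma gl_total:
  assumes "a \<noteq> b"
  shows "grevlex_less a b \<or> grevlex_less b a"
proof (cases "mdeg a = mdeg b")
  case False
  then show ?thesis unfolding grevlex_less_def by auto
next
  case True
  let ?D = "{i. lk a i \<noteq> lk b i}"
  have fin: "finite ?D"
    by (rule finite_subset[of _ "ks a \<union> ks b"]) (auto simp: in_keys_iff)
  have ne: "?D \<noteq> {}"
  proof
    assume "?D = {}"
    then have "a = b" by (intro poly_mapping_eqI) auto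
    then show False using assms by blast
  qed
  define i where "i = Max ?D"
  have iD: "i \<in> ?D" unfolding i_def by (rule Max_in[OF fin ne])
  have above: "\<forall>j>i. lk a j = lk b j"
  proof (intro allI impI)
    fix j assume "i < j"
    show "lk a j = lk b j"
    proof (rule ccontr)
      assume "lk a j \<noteq> lk b j"
      then have "j \<le> i" using fin i_def by (simp add: Max_ge)
      then show False using \<open>i < j\<close> by simp
    qed
  qed
  show ?thesis
  proof (cases "lk a i < lk b i")
    case True
    then have "grevlex_less b a" using above \<open>mdeg a = mdeg b\<close> unfolding grevlex_less_def
      by (metis)
    then show ?thesis by simp
  next
    case False
    then have "lk b i < lk a i" using iD by auto
    then have "grevlex_less a b" using above \<open>mdeg a = mdeg b\<close> unfolding grevlex_less_def
      by (metis)
    then show ?thesis by simp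
  qed
qed

lemma gl_add: "grevlex_less (u + a) (u + b) \<longleftrightarrow> grevlex_less a b"
  unfolding grevlex_less_def by (simp add: mdeg_add lookup_add)

lemma finite_max_exists:
  assumes "finite A" "A \<noteq> {}"
  shows "\<exists>m\<in>A. \<forall>m'\<in>A. m' \<noteq> m \<longrightarrow> grevlex_less m' m"
  using assms
proof (induction A rule: finite_ne_induct)
  case (singleton x)
  then show ?case by auto
next
  case (insert x F)
  then obtain m where m: "m \<in> F" "\<forall>m'\<in>F. m' \<noteq> m \<longrightarrow> grevlex_less m' m" by auto
  show ?case
  proof (cases "grevlex_less x m")
    case True
    have "x \<noteq> m" using insert.hyps m(1) by auto
    then show ?thesis using m True by (intro bexI[of _ m]) auto
  next
    case False
    have "x \<noteq> m" using insert.hyps m(1) by auto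
    then have "grevlex_less m x" using gl_total False by blast
    then show ?thesis using m gl_trans insert.hyps by (intro bexI[of _ x]) auto
  qed
qed

lemma lead_char:
  fixes f :: "('a::zero) mpoly"
  assumes "m \<in> ks f" "\<forall>m'\<in>ks f. m' \<noteq> m \<longrightarrow> grevlex_less m' m"
  shows "lead_monom f = m"
  unfolding lead_monom_def
proof (rule the_equality)
  show "m \<in> ks f \<and> (\<forall>m'\<in>ks f. m' \<noteq> m \<longrightarrow> grevlex_less m' m)" using assms by auto
next
  fix x assume x: "x \<in> ks f \<and> (\<forall>m'\<in>ks f. m' \<noteq> x \<longrightarrow> grevlex_less m' x)"
  show "x = m"
  proof (rule ccontr)
    assume "x \<noteq> m"
    then have "grevlex_less x m" "grevlex_less m x" using x assms by auto
    then show False using gl_asym by blast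
  qed
qed

lemma lead_props:
  fixes f :: "('a::zero) mpoly"
  assumes "f \<noteq> 0"
  shows "lead_monom f \<in> ks f" "\<And>m'. m' \<in> ks f \<Longrightarrow> m' \<noteq> lead_monom f \<Longrightarrow> grevlex_less m' (lead_monom f)"
proof -
  have ne: "ks f \<noteq> {}" using assms by (metis keys_eq_empty)
  obtain m where m: "m \<in> ks f" "\<forall>m'\<in>ks f. m' \<noteq> m \<longrightarrow> grevlex_less m' m"
    using finite_max_exists[OF finite_keys ne] by auto
  have "lead_monom f = m" by (rule lead_char[OF m])
  then show "lead_monom f \<in> ks f" "\<And>m'. m' \<in> ks f \<Longrightarrow> m' \<noteq> lead_monom f \<Longrightarrow> grevlex_less m' (lead_monom f)"
    using m by auto
qed

lemma lead_in: "f \<noteq> 0 \<Longrightarrow> lead_monom f \<in> ks f"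
  using lead_props by blast

lemma lead_max: "f \<noteq> 0 \<Longrightarrow> m' \<in> ks f \<Longrightarrow> m' \<noteq> lead_monom f \<Longrightarrow> grevlex_less m' (lead_monom f)"
  using lead_props by blast

lemma lead_le: "f \<noteq> 0 \<Longrightarrow> m' \<in> ks f \<Longrightarrow> \<not> grevlex_less (lead_monom f) m'"
  using lead_max gl_asym gl_irrefl by metis



lemma poly_expand: "p = (\<Sum>x\<in>ks p. Poly_Mapping.single x (lk p x))"
  by (rule poly_mapping_eqI) (simp add: lookup_sum lookup_single when_def in_keys_iff)

lemma mdvd_add: "mdvd u (u + k)"
  unfolding mdvd_def by (simp add: lookup_add)

lemma add_minus_monom: "mdvd u x \<Longrightarrow> u + (x - u) = (x::monom)"
  unfolding mdvd_def by (intro poly_mapping_eqI) (simp add: lookup_add lookup_minus)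

lemma add_minus_monom2: "(u + k) - u = (k::monom)"
  by (intro poly_mapping_eqI) (simp add: lookup_add lookup_minus)

lemma single_mult_expand:
  fixes q :: "('a::comm_semiring_1) mpoly"
  shows "Poly_Mapping.single u c * q = (\<Sum>y\<in>ks q. Poly_Mapping.single (u + y) (c * lk q y))"
proof -
  have "Poly_Mapping.single u c * q = Poly_Mapping.single u c * (\<Sum>y\<in>ks q. Poly_Mapping.single y (lk q y))"
    by (subst poly_expand[of q]) simp
  also have "\<dots> = (\<Sum>y\<in>ks q. Poly_Mapping.single (u + y) (c * lk q y))"
    by (simp add: sum_distrib_left mult_single)
  finally show ?thesis .
qed

lemma lookup_single_mult:
  fixes q :: "('a::comm_semiring_1) mpoly"
  shows "lk (Poly_Mapping.single u c * q) x = (if mdvd u x then c * lk q (x - u) else 0)"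
proof -
  have "lk (Poly_Mapping.single u c * q) x = (\<Sum>y\<in>ks q. (if u + y = x then c * lk q y else 0))"
    by (simp add: single_mult_expand lookup_sum lookup_single when_def)
  also have "\<dots> = (if mdvd u x then c * lk q (x - u) else 0)"
  proof (cases "mdvd u x")
    case True
    have "(\<Sum>y\<in>ks q. (if u + y = x then c * lk q y else 0)) = (\<Sum>y\<in>ks q. (if y = x - u then c * lk q y else 0))"
      by (rule sum.cong) (auto simp: add_minus_monom[OF True] add_minus_monom2 dest: sym)
    also have "\<dots> = c * lk q (x - u)"
      by (simp add: in_keys_iff)
    finally show ?thesis using True by simp
  next
    case False
    then have "\<And>y. u + y \<noteq> x" using mdvd_add by blast
    then show ?thesis using False by simp
  qed
  finally show ?thesis .
qed

lemma lookup_single_mult_add: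
  fixes q :: "('a::comm_semiring_1) mpoly"
  shows "lk (Poly_Mapping.single u c * q) (u + k) = c * lk q k"
  by (simp add: lookup_single_mult mdvd_add add_minus_monom2)

lemma keys_single_mult:
  fixes q :: "('a::field) mpoly"
  assumes "c \<noteq> 0"
  shows "ks (Poly_Mapping.single u c * q) = (\<lambda>k. u + k) ` ks q"
proof (rule set_eqI)
  fix x
  show "x \<in> ks (Poly_Mapping.single u c * q) \<longleftrightarrow> x \<in> (\<lambda>k. u + k) ` ks q"
  proof
    assume "x \<in> ks (Poly_Mapping.single u c * q)"
    then have "mdvd u x" "lk q (x - u) \<noteq> 0"
      by (auto simp: in_keys_iff lookup_single_mult split: if_splits)
    then show "x \<in> (\<lambda>k. u + k) ` ks q"
      using add_minus_monom by (auto simp: in_keys_iff intro!: image_eqI[of _ _ "x - u"])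
  next
    assume "x \<in> (\<lambda>k. u + k) ` ks q"
    then obtain k where "x = u + k" "k \<in> ks q" by auto
    then show "x \<in> ks (Poly_Mapping.single u c * q)"
      using assms by (simp add: in_keys_iff lookup_single_mult_add)
  qed
qed

lemma lead_single_mult:
  fixes q :: "('a::field) mpoly"
  assumes "c \<noteq> 0" "q \<noteq> 0"
  shows "lead_monom (Poly_Mapping.single u c * q) = u + lead_monom q"
proof (rule lead_char)
  show "u + lead_monom q \<in> ks (Poly_Mapping.single u c * q)"
    using keys_single_mult[OF assms(1)] lead_in[OF assms(2)] by auto
  show "\<forall>m'\<in>ks (Poly_Mapping.single u c * q). m' \<noteq> u + lead_monom q \<longrightarrow> grevlex_less m' (u + lead_monom q)"
    using keys_single_mult[OF assms(1)] lead_max[OF assms(2)] gl_add by auto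
qed

lemma lookup_scal: "lk (Poly_Mapping.single 0 c * (q :: ('a::comm_semiring_1) mpoly)) x = c * lk q x"
  using lookup_single_mult_add[of 0 c q x] by simp

definition monval :: "monom \<Rightarrow> (nat \<Rightarrow> 'a::comm_ring_1) \<Rightarrow> 'a" where
  "monval m v = (\<Prod>i\<in>ks m. v i ^ lk m i)"

lemma monval_superset: "finite A \<Longrightarrow> ks m \<subseteq> A \<Longrightarrow> monval m v = (\<Prod>i\<in>A. v i ^ lk m i)"
  unfolding monval_def by (intro prod.mono_neutral_left) (auto simp: in_keys_iff)

lemma monval_add: "monval (a + b) v = monval a v * monval b v"
proof -
  have "monval (a + b) v = (\<Prod>i\<in>ks a \<union> ks b. v i ^ lk (a + b) i)"
    by (rule monval_superset) (auto simp: keys_add_nat)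
  also have "\<dots> = (\<Prod>i\<in>ks a \<union> ks b. v i ^ lk a i) * (\<Prod>i\<in>ks a \<union> ks b. v i ^ lk b i)"
    by (simp add: lookup_add power_add prod.distrib)
  also have "\<dots> = monval a v * monval b v"
    by (simp add: monval_superset[symmetric])
  finally show ?thesis .
qed

lemma monval_zero[simp]: "monval 0 v = 1"
  unfolding monval_def by simp

lemma monval_scale: "monval m (\<lambda>k. c * v k) = c ^ mdeg m * monval m v"
  unfolding monval_def mdeg_def
  by (simp add: power_mult_distrib prod.distrib power_sum)

lemma mpeval_monval: "mpeval f v = (\<Sum>m\<in>ks f. lk f m * monval m v)"
  unfolding mpeval_def monval_def by simp

lemma mpeval_superset:
  "finite A \<Longrightarrow> ks f \<subseteq> A \<Longrightarrow> mpeval f v = (\<Sum>m\<in>A. lk f m * monval m v)"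
  unfolding mpeval_monval by (intro sum.mono_neutral_left) (auto simp: in_keys_iff)

lemma mpeval_add: "mpeval (f + g) v = mpeval f v + mpeval g v"
proof -
  let ?A = "ks f \<union> ks g"
  have "mpeval (f + g) v = (\<Sum>m\<in>?A. lk (f+g) m * monval m v)"
    by (rule mpeval_superset) (use keys_add[of f g] in auto)
  also have "\<dots> = (\<Sum>m\<in>?A. lk f m * monval m v) + (\<Sum>m\<in>?A. lk g m * monval m v)"
    by (simp add: lookup_add distrib_right sum.distrib)
  also have "\<dots> = mpeval f v + mpeval g v"
    by (simp add: mpeval_superset[symmetric])
  finally show ?thesis .
qed

lemma mpeval_zero[simp]: "mpeval 0 v = 0"
  unfolding mpeval_def by simp

lemma mpeval_sum: "finite I \<Longrightarrow> mpeval (\<Sum>i\<in>I. p i) v = (\<Sum>i\<in>I. mpeval (p i) v)"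
  by (induction I rule: finite_induct) (simp_all add: mpeval_add)

lemma mpeval_single: "mpeval (Poly_Mapping.single m c) v = c * monval m v"
  unfolding mpeval_monval by auto

lemma mpeval_uminus: "mpeval (- f) v = - mpeval f v"
  unfolding mpeval_monval by (simp add: sum_negf)

lemma mpeval_diff: "mpeval (f - g) v = mpeval f v - mpeval g v"
  using mpeval_add[of f "-g" v] mpeval_uminus[of g v] by simp

lemma mpeval_mult: "mpeval (f * g) v = mpeval f v * mpeval g v"
proof -
  have "f * g = (\<Sum>x\<in>ks f. Poly_Mapping.single x (lk f x)) * (\<Sum>y\<in>ks g. Poly_Mapping.single y (lk g y))"
    by (subst poly_expand[of f], subst poly_expand[of g]) simp
  also have "\<dots> = (\<Sum>x\<in>ks f. \<Sum>y\<in>ks g. Poly_Mapping.single (x + y) (lk f x * lk g y))"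
    by (simp add: sum_product mult_single)
  finally have "mpeval (f * g) v = (\<Sum>x\<in>ks f. \<Sum>y\<in>ks g. lk f x * lk g y * monval (x + y) v)"
    by (simp add: mpeval_sum mpeval_single)
  also have "\<dots> = (\<Sum>x\<in>ks f. lk f x * monval x v) * (\<Sum>y\<in>ks g. lk g y * monval y v)"
    by (simp add: sum_product monval_add mult_ac)
  also have "\<dots> = mpeval f v * mpeval g v" by (simp add: mpeval_monval)
  finally show ?thesis .
qed



definition hom :: "nat \<Rightarrow> ('a::zero) mpoly \<Rightarrow> 'a mpoly" where
  "hom k p = Abs_poly_mapping (\<lambda>m. if mdeg m = k then lk p m else 0)"

lemma lookup_hom: "lk (hom k p) m = (if mdeg m = k then lk p m else 0)"
proof -
  have "finite {m. (if mdeg m = k then lk p m else 0) \<noteq> 0}"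
    by (rule finite_subset[of _ "ks p"]) (auto simp: in_keys_iff)
  then show ?thesis unfolding hom_def by simp
qed

lemma keys_hom: "ks (hom k p) = {m \<in> ks p. mdeg m = k}"
  by (auto simp: in_keys_iff lookup_hom split: if_splits)

lemma hom_add: "hom k (p + q) = hom k p + hom k q"
  by (rule poly_mapping_eqI) (simp add: lookup_hom lookup_add)

lemma hom_zero[simp]: "hom k 0 = 0"
  by (rule poly_mapping_eqI) (simp add: lookup_hom)

lemma hom_sum: "hom k (\<Sum>i\<in>I. p i) = (\<Sum>i\<in>I. hom k (p i))"
  by (induction I rule: infinite_finite_induct) (simp_all add: hom_add)

lemma hom_single: "hom k (Poly_Mapping.single z c) = (if mdeg z = k then Poly_Mapping.single z c else 0)"
  by (rule poly_mapping_eqI) (simp add: lookup_hom lookup_single when_def)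

lemma hom_mult_homog:
  fixes a h :: "('a::comm_semiring_1) mpoly"
  assumes h: "\<forall>y\<in>ks h. mdeg y = e"
  shows "hom k (a * h) = (if e \<le> k then hom (k - e) a * h else 0)"
proof -
  have ah: "a * h = (\<Sum>x\<in>ks a. \<Sum>y\<in>ks h. Poly_Mapping.single (x + y) (lk a x * lk h y))"
    by (subst poly_expand[of a], subst poly_expand[of h]) (simp add: sum_product mult_single)
  have "hom k (a * h) = (\<Sum>x\<in>ks a. \<Sum>y\<in>ks h. if mdeg x + e = k then Poly_Mapping.single (x + y) (lk a x * lk h y) else 0)"
    unfolding ah hom_sum hom_single using h by (intro sum.cong refl) (simp add: mdeg_add)
  also have "\<dots> = (\<Sum>x\<in>ks a. if mdeg x + e = k then Poly_Mapping.single x (lk a x) * h else 0)"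
  proof (intro sum.cong refl)
    fix x assume "x \<in> ks a"
    show "(\<Sum>y\<in>ks h. if mdeg x + e = k then Poly_Mapping.single (x + y) (lk a x * lk h y) else 0) =
          (if mdeg x + e = k then Poly_Mapping.single x (lk a x) * h else 0)"
      by (subst poly_expand[of h]) (simp add: sum_distrib_left mult_single)
  qed
  also have "\<dots> = (if e \<le> k then hom (k - e) a * h else 0)"
  proof (cases "e \<le> k")
    case True
    have "hom (k - e) a * h = (\<Sum>x\<in>ks a. if mdeg x = k - e then Poly_Mapping.single x (lk a x) else 0) * h"
      by (subst poly_expand[of a]) (simp add: hom_sum hom_single)
    also have "\<dots> = (\<Sum>x\<in>ks a. if mdeg x + e = k then Poly_Mapping.single x (lk a x) * h else 0)"
      unfolding sum_distrib_right using True by (intro sum.cong refl) auto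
    finally show ?thesis using True by simp
  next
    case False
    then show ?thesis by simp
  qed
  finally show ?thesis .
qed

lemma Sring_keys: "f \<in> Sring s \<Longrightarrow> m \<in> ks f \<Longrightarrow> ks m \<subseteq> {..<s}"
  unfolding Sring_def by auto

lemma Shom_iff: "f \<in> Shom s d \<longleftrightarrow> (\<forall>m\<in>ks f. ks m \<subseteq> {..<s} \<and> mdeg m = d)"
  unfolding Shom_def Sring_def by auto

lemma Sring_iff: "f \<in> Sring s \<longleftrightarrow> (\<forall>m\<in>ks f. ks m \<subseteq> {..<s})"
  unfolding Sring_def by auto

lemma Shom_Sring: "f \<in> Shom s d \<Longrightarrow> f \<in> Sring s"
  unfolding Shom_def by auto

lemma Shom_zero[simp]: "0 \<in> Shom s d"
  unfolding Shom_iff by simp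

lemma Shom_add: "f \<in> Shom s d \<Longrightarrow> g \<in> Shom s d \<Longrightarrow> f + g \<in> Shom s d"
  unfolding Shom_iff using keys_add[of f g] by blast

lemma Shom_uminus: "f \<in> Shom s d \<Longrightarrow> - (f :: ('a::ab_group_add) mpoly) \<in> Shom s d"
  unfolding Shom_iff by (simp add: in_keys_iff)

lemma Shom_diff: "f \<in> Shom s d \<Longrightarrow> g \<in> Shom s d \<Longrightarrow> f - (g :: ('a::ab_group_add) mpoly) \<in> Shom s d"
  using Shom_add[of f s d "-g"] Shom_uminus[of g s d] by simp

lemma Shom_sum: "(\<And>i. i \<in> I \<Longrightarrow> p i \<in> Shom s d) \<Longrightarrow> (\<Sum>i\<in>I. p i) \<in> Shom s d"
  by (induction I rule: infinite_finite_induct) (simp_all add: Shom_add)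

lemma Shom_single: "ks m \<subseteq> {..<s} \<Longrightarrow> mdeg m = d \<Longrightarrow> Poly_Mapping.single m c \<in> Shom s d"
  unfolding Shom_iff by simp

lemma Sring_add: "f \<in> Sring s \<Longrightarrow> g \<in> Sring s \<Longrightarrow> f + g \<in> Sring s"
  unfolding Sring_iff using keys_add[of f g] by blast

lemma Sring_zero[simp]: "0 \<in> Sring s"
  unfolding Sring_iff by simp

lemma Sring_sum: "(\<And>i. i \<in> I \<Longrightarrow> p i \<in> Sring s) \<Longrightarrow> (\<Sum>i\<in>I. p i) \<in> Sring s"
  by (induction I rule: infinite_finite_induct) (simp_all add: Sring_add)

lemma Sring_mult: "f \<in> Sring s \<Longrightarrow> g \<in> Sring s \<Longrightarrow> f * g \<in> Sring s"
  unfolding Sring_iff using keys_mult[of f g] by (force simp: keys_add_nat)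

lemma Shom_mult: "f \<in> Shom s d \<Longrightarrow> g \<in> Shom s e \<Longrightarrow> f * g \<in> Shom s (d + e)"
  unfolding Shom_iff using keys_mult[of f g] by (force simp: keys_add_nat mdeg_add)

lemma Sring_single: "ks m \<subseteq> {..<s} \<Longrightarrow> Poly_Mapping.single m c \<in> Sring s"
  unfolding Sring_iff by simp

lemma hom_Shom: "f \<in> Sring s \<Longrightarrow> hom k f \<in> Shom s k"
  unfolding Shom_iff Sring_iff keys_hom by auto

lemma hom_Sring: "f \<in> Sring s \<Longrightarrow> hom k f \<in> Sring s"
  using hom_Shom Shom_Sring by blast

lemma hom_id: "f \<in> Shom s k \<Longrightarrow> hom k f = f"
  unfolding Shom_iff by (intro poly_mapping_eqI) (auto simp: lookup_hom in_keys_iff)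



definition vanish :: "nat \<Rightarrow> nat set list \<Rightarrow> ('a::field) mpoly \<Rightarrow> bool" where
  "vanish n es f \<longleftrightarrow> (\<forall>P\<in>torus_X n es. \<forall>v\<in>P. mpeval f v = 0)"

definition Ivan :: "nat \<Rightarrow> nat set list \<Rightarrow> nat \<Rightarrow> ('a::field) mpoly set" where
  "Ivan n es d = {f. f \<in> Shom (length es) d \<and> vanish n es f}"

definition Ls :: "nat \<Rightarrow> nat set list \<Rightarrow> nat \<Rightarrow> ('a::field) itself \<Rightarrow> monom set" where
  "Ls n es d T = {lead_monom f | f. f \<in> (Ivan n es d :: 'a mpoly set) \<and> f \<noteq> 0}"

definition Mset :: "nat \<Rightarrow> nat \<Rightarrow> monom set" where
  "Mset s d = {m. ks m \<subseteq> {..<s} \<and> mdeg m = d}"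

definition Tm :: "nat \<Rightarrow> monom" where
  "Tm s = Poly_Mapping.single (s - 1) 2"

definition Tp :: "nat \<Rightarrow> ('a::field) mpoly" where
  "Tp s = Poly_Mapping.single (Tm s) 1"

lemma mdeg_Tm[simp]: "mdeg (Tm s) = 2"
  unfolding Tm_def by (simp add: mdeg_single)

lemma lookup_Tm: "lk (Tm s) i = (if i = s - 1 then 2 else 0)"
  unfolding Tm_def by (simp add: lookup_single when_def)

lemma keys_Tm: "ks (Tm s) = {s - 1}"
  unfolding Tm_def by simp

lemma mpeval_Tp: "mpeval (Tp s) v = v (s - 1) ^ 2"
  unfolding Tp_def by (simp add: mpeval_single monval_def keys_Tm lookup_Tm)

lemma vanish_add: "vanish n es f \<Longrightarrow> vanish n es g \<Longrightarrow> vanish n es (f + g)"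
  unfolding vanish_def by (simp add: mpeval_add)

lemma vanish_zero[simp]: "vanish n es 0"
  unfolding vanish_def by simp

lemma vanish_uminus: "vanish n es f \<Longrightarrow> vanish n es (- f)"
  unfolding vanish_def by (simp add: mpeval_uminus)

lemma vanish_diff: "vanish n es f \<Longrightarrow> vanish n es g \<Longrightarrow> vanish n es (f - g)"
  unfolding vanish_def by (simp add: mpeval_diff)

lemma vanish_mult: "vanish n es g \<Longrightarrow> vanish n es (a * g)"
  unfolding vanish_def by (simp add: mpeval_mult)

lemma vanish_sum: "(\<And>i. i \<in> I \<Longrightarrow> vanish n es (p i)) \<Longrightarrow> vanish n es (\<Sum>i\<in>I. p i)"
  by (induction I rule: infinite_finite_induct) (simp_all add: vanish_add)

locale gsetup =
  fixes n :: nat and es :: "nat set list"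
  assumes sg: "simple_graph n es" and s1: "length es \<ge> 1"
begin

abbreviation "s \<equiv> length es"

lemma edge_map_nz:
  fixes x :: "nat \<Rightarrow> 'a::field"
  assumes "\<forall>i\<in>{1..n}. x i \<noteq> 0" "k < s"
  shows "edge_map es x k \<noteq> 0"
proof -
  have "es ! k \<in> set es" using assms(2) by simp
  then have sub: "es ! k \<subseteq> {1..n}" and c2: "card (es ! k) = 2" using sg unfolding simple_graph_def by auto
  then have "finite (es ! k)" using card_ge_0_finite by force
  then have "(\<Prod>i\<in>es ! k. x i) \<noteq> 0" using assms(1) sub
    by (subst prod_zero_iff) auto
  then show ?thesis unfolding edge_map_def using assms(2) by simp
qed

lemma pt_struct:
  assumes "(P :: (nat \<Rightarrow> 'a::field) set) \<in> torus_X n es"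
  obtains w where "P = proj_pt w" "\<And>k. k < s \<Longrightarrow> w k \<noteq> 0"
  using assms edge_map_nz unfolding torus_X_def by blast

lemma in_proj_pt: "v \<in> proj_pt w \<longleftrightarrow> (\<exists>c. c \<noteq> 0 \<and> v = (\<lambda>k. c * w k))"
  unfolding proj_pt_def by auto

lemma rep_in: "rep (proj_pt w) \<in> proj_pt w"
proof -
  have "w \<in> proj_pt w" unfolding in_proj_pt by (intro exI[of _ 1]) simp
  then show ?thesis unfolding rep_def by (metis someI)
qed

lemma pt_nz:
  assumes "(P :: (nat \<Rightarrow> 'a::field) set) \<in> torus_X n es" "v \<in> P" "k < s"
  shows "v k \<noteq> 0"
proof -
  obtain w where w: "P = proj_pt w" "\<And>k. k < s \<Longrightarrow> w k \<noteq> 0" using pt_struct[OF assms(1)] by blast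
  then obtain c where "c \<noteq> 0" "v = (\<lambda>k. c * w k)" using assms(2) in_proj_pt by blast
  then show ?thesis using w(2)[OF assms(3)] by simp
qed

lemma rep_nz:
  assumes "(P :: (nat \<Rightarrow> 'a::field) set) \<in> torus_X n es" "k < s"
  shows "rep P k \<noteq> 0" and "rep P \<in> P"
proof -
  obtain w where w: "P = proj_pt w" "\<And>k. k < s \<Longrightarrow> w k \<noteq> 0" using pt_struct[OF assms(1)] by blast
  show "rep P \<in> P" using rep_in w(1) by simp
  then show "rep P k \<noteq> 0" using pt_nz assms by blast
qed

lemma mpeval_scale:
  assumes "f \<in> Shom s' d"
  shows "mpeval f (\<lambda>k. c * w k) = c ^ d * mpeval (f :: ('a::field) mpoly) w"
proof -
  have "mpeval f (\<lambda>k. c * w k) = (\<Sum>m\<in>ks f. lk f m * (c ^ d * monval m w))"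
    unfolding mpeval_monval monval_scale using assms unfolding Shom_iff by (intro sum.cong) auto
  then show ?thesis by (simp add: mpeval_monval sum_distrib_left mult_ac)
qed

lemma vanish_iff_rep:
  assumes "(f :: ('a::field) mpoly) \<in> Shom s' d"
  shows "vanish n es f \<longleftrightarrow> (\<forall>P\<in>torus_X n es. mpeval f (rep P) = 0)"
proof
  assume "vanish n es f"
  then show "\<forall>P\<in>torus_X n es. mpeval f (rep P) = 0"
    unfolding vanish_def using rep_nz(2)[of _ 0] s1 by fastforce
next
  assume h: "\<forall>P\<in>torus_X n es. mpeval f (rep P) = 0"
  show "vanish n es f" unfolding vanish_def
  proof (intro ballI)
    fix P :: "(nat \<Rightarrow> 'a) set" and v assume P: "P \<in> torus_X n es" and v: "v \<in> P"
    obtain w where w: "P = proj_pt w" "\<And>k. k < s \<Longrightarrow> w k \<noteq> 0" using pt_struct[OF P] by blast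
    obtain c where c: "c \<noteq> 0" "v = (\<lambda>k. c * w k)" using v w in_proj_pt by blast
    have "rep P \<in> P" using rep_in w(1) by simp
    then obtain c0 where c0: "c0 \<noteq> 0" "rep P = (\<lambda>k. c0 * w k)" using w in_proj_pt by blast
    have "c0 ^ d * mpeval f w = 0" using h P c0 mpeval_scale[OF assms] by metis
    then have "mpeval f w = 0" using c0 by simp
    then show "mpeval f v = 0" using c mpeval_scale[OF assms] by simp
  qed
qed

lemma vanish_Tp_mult: "vanish n es (Tp s * (g :: ('a::field) mpoly)) \<longleftrightarrow> vanish n es g"
proof -
  have "\<And>P v. P \<in> torus_X n es \<Longrightarrow> v \<in> P \<Longrightarrow> (v (s - 1) :: 'a) \<noteq> 0"
  proof -
    fix P v assume "P \<in> torus_X n es" "(v :: nat \<Rightarrow> 'a) \<in> P"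
    then show "v (s - 1) \<noteq> 0" using pt_nz[of P v "s - 1"] s1 by simp
  qed
  then show ?thesis
    unfolding vanish_def by (auto simp: mpeval_mult mpeval_Tp)
qed

end



lemma Tp_eq: "Poly_Mapping.single (Poly_Mapping.single (s - 1) 2) 1 = Tp s"
  unfolding Tp_def Tm_def by simp

lemma lead_single: "c \<noteq> 0 \<Longrightarrow> lead_monom (Poly_Mapping.single m c) = m"
  by (rule lead_char) auto

lemma keys_Tp_mult:
  "x \<in> ks (Tp s * (q :: ('a::field) mpoly)) \<Longrightarrow> 2 \<le> lk x (s - 1)"
  unfolding Tp_def using keys_single_mult[of 1 "Tm s" q]
  by (auto simp: lookup_add lookup_Tm)

lemma ideal_gen_base: "g \<in> A \<Longrightarrow> g \<in> ideal_gen s (A :: ('a::comm_ring_1) mpoly set)"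
  unfolding ideal_gen_def
  by (intro CollectI exI[of _ "{g}"] exI[of _ "\<lambda>_. 1"]) (simp add: Sring_iff)

lemma ideal_gen_mult:
  assumes "f \<in> ideal_gen s (A :: ('a::comm_ring_1) mpoly set)" "b \<in> Sring s"
  obtains F c where "finite F" "F \<subseteq> A" "\<forall>g\<in>F. c g \<in> Sring s" "b * f = (\<Sum>g\<in>F. c g * g)"
proof -
  obtain F c where F: "finite F" "F \<subseteq> A" "\<forall>g\<in>F. c g \<in> Sring s" "f = (\<Sum>g\<in>F. c g * g)"
    using assms(1) unfolding ideal_gen_def by blast
  have A: "b * f = (\<Sum>g\<in>F. (b * c g) * g)" unfolding F(4) by (simp add: sum_distrib_left mult_ac)
  have B: "\<forall>g\<in>F. b * c g \<in> Sring s" using F(3) assms(2) by (simp add: Sring_mult)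
  show ?thesis by (rule that[OF F(1) F(2) B A])
qed

lemma gl_last:
  fixes g :: "('a::zero) mpoly"
  assumes "g \<in> Shom s d" "g \<noteq> 0" "x \<in> ks g" "s \<ge> 1"
  shows "lk (lead_monom g) (s - 1) \<le> lk x (s - 1)"
proof (cases "x = lead_monom g")
  case True
  then show ?thesis by simp
next
  case False
  let ?l = "lead_monom g"
  have gl: "grevlex_less x ?l" using lead_max[OF assms(2,3) False] .
  have "?l \<in> ks g" using lead_in[OF assms(2)] .
  then have deq: "mdeg x = mdeg ?l" and kx: "ks x \<subseteq> {..<s}"
    using assms(1,3) unfolding Shom_iff by auto
  then obtain i where i: "lk ?l i < lk x i" "\<forall>j>i. lk x j = lk ?l j"
    using gl unfolding grevlex_less_def by auto
  have "i < s"
  proof (rule ccontr)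
    assume "\<not> i < s"
    then have "lk x i = 0" using kx by (auto simp: in_keys_iff)
    then show False using i(1) by simp
  qed
  show ?thesis
  proof (cases "i = s - 1")
    case True
    then show ?thesis using i(1) by simp
  next
    case False
    then have "s - 1 > i" using \<open>i < s\<close> by simp
    then show ?thesis using i(2) by simp
  qed
qed

context gsetup begin

lemma lead_split:
  fixes h g q :: "('a::field) mpoly"
  assumes "h \<noteq> 0" "h = g + Tp s * q" "g \<in> Shom s d" "lk (lead_monom h) (s - 1) < 2"
  shows "g \<noteq> 0 \<and> lead_monom g = lead_monom h"
proof -
  let ?m = "lead_monom h"
  have mh: "?m \<in> ks h" using lead_in[OF assms(1)] .
  have mT: "?m \<notin> ks (Tp s * q)" using keys_Tp_mult assms(4) by fastforce
  then have "lk (Tp s * q) ?m = 0" by (simp add: in_keys_iff)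
  then have mg: "?m \<in> ks g" using mh assms(2) by (simp add: in_keys_iff lookup_add)
  then have g0: "g \<noteq> 0" by auto
  let ?l = "lead_monom g"
  have "lk ?l (s - 1) \<le> lk ?m (s - 1)" using gl_last[OF assms(3) g0 mg s1] .
  then have "?l \<notin> ks (Tp s * q)" using keys_Tp_mult assms(4) by fastforce
  then have "lk (Tp s * q) ?l = 0" by (simp add: in_keys_iff)
  then have lh: "?l \<in> ks h" using lead_in[OF g0] assms(2) by (simp add: in_keys_iff lookup_add)
  have "?l = ?m"
  proof (rule ccontr)
    assume ne: "?l \<noteq> ?m"
    have "grevlex_less ?l ?m" using lead_max[OF assms(1) lh ne] .
    moreover have "grevlex_less ?m ?l" using lead_max[OF g0 mg] ne by metis
    ultimately show False using gl_asym by blast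
  qed
  then show ?thesis using g0 by simp
qed

definition IT :: "nat \<Rightarrow> ('a::field) mpoly \<Rightarrow> bool" where
  "IT k h \<longleftrightarrow> (\<exists>g q. h = g + Tp s * q \<and> g \<in> Ivan n es k)"

definition IP :: "('a::field) mpoly \<Rightarrow> bool" where
  "IP f \<longleftrightarrow> (\<forall>k. IT k (hom k f))"

lemma Id_zero[simp]: "0 \<in> Ivan n es k"
  unfolding Ivan_def by simp

lemma Id_add: "f \<in> Ivan n es k \<Longrightarrow> g \<in> Ivan n es k \<Longrightarrow> f + g \<in> Ivan n es k"
  unfolding Ivan_def by (simp add: Shom_add vanish_add)

lemma IT_zero: "IT k 0"
  unfolding IT_def by (intro exI[of _ 0]) simp

lemma IT_add: "IT k f \<Longrightarrow> IT k g \<Longrightarrow> IT k (f + g)"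
  unfolding IT_def
proof (elim exE conjE)
  fix g1 q1 g2 q2
  assume "f = g1 + Tp s * q1" "g1 \<in> Ivan n es k" "g = g2 + Tp s * q2" "g2 \<in> Ivan n es k"
  then show "\<exists>ga q. f + g = ga + Tp s * q \<and> ga \<in> Ivan n es k"
    by (intro exI[of _ "g1 + g2"] exI[of _ "q1 + q2"]) (simp add: Id_add distrib_left)
qed

lemma IP_zero: "IP 0"
  unfolding IP_def by (simp add: IT_zero)

lemma IP_add: "IP f \<Longrightarrow> IP g \<Longrightarrow> IP (f + g)"
  unfolding IP_def by (simp add: hom_add IT_add)

lemma IP_sum: "(\<And>i. i \<in> I \<Longrightarrow> IP (p i)) \<Longrightarrow> IP (\<Sum>i\<in>I. p i)"
  by (induction I rule: infinite_finite_induct) (simp_all add: IP_add IP_zero)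

lemma IP_mult_Id:
  fixes a h :: "('a::field) mpoly"
  assumes "a \<in> Sring s" "h \<in> Ivan n es e"
  shows "IP (a * h)"
  unfolding IP_def
proof
  fix k
  have hS: "h \<in> Shom s e" and hv: "vanish n es h" using assms(2) unfolding Ivan_def by auto
  have hk: "\<forall>y\<in>ks h. mdeg y = e" using hS unfolding Shom_iff by auto
  show "IT k (hom k (a * h))"
  proof (cases "e \<le> k")
    case True
    have "hom (k - e) a * h \<in> Shom s (k - e + e)"
      using Shom_mult[OF hom_Shom[OF assms(1)] hS] .
    then have "hom (k - e) a * h \<in> Shom s k" using True by simp
    moreover have "vanish n es (hom (k - e) a * h)" using hv by (rule vanish_mult)
    ultimately have A: "hom (k - e) a * h \<in> Ivan n es k" unfolding Ivan_def by simp
    have "hom k (a * h) = hom (k - e) a * h + Tp s * 0" using True by (simp add: hom_mult_homog[OF hk])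
    then show ?thesis unfolding IT_def using A by blast
  next
    case False
    then show ?thesis unfolding hom_mult_homog[OF hk] by (simp add: IT_zero)
  qed
qed

lemma Tp_Shom: "Tp s \<in> Shom s 2"
  unfolding Tp_def using s1 by (intro Shom_single) (auto simp: keys_Tm)

lemma IP_mult_T:
  fixes a :: "('a::field) mpoly"
  assumes "a \<in> Sring s"
  shows "IP (a * Tp s)"
  unfolding IP_def
proof
  fix k
  have hk: "\<forall>y\<in>ks (Tp s :: 'a mpoly). mdeg y = 2" using Tp_Shom unfolding Shom_iff by auto
  show "IT k (hom k (a * Tp s))"
  proof -
    have "hom k (a * Tp s) = 0 + Tp s * (if 2 \<le> k then hom (k - 2) a else 0)"
      by (simp add: hom_mult_homog[OF hk] mult.commute)
    then show ?thesis unfolding IT_def using Id_zero by blast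
  qed
qed

lemma IP_ideal_gen:
  fixes A :: "('a::field) mpoly set"
  assumes "f \<in> ideal_gen s A" "b \<in> Sring s" "\<And>g a. g \<in> A \<Longrightarrow> a \<in> Sring s \<Longrightarrow> IP (a * g)"
  shows "IP (b * f)"
proof -
  obtain F c where "finite F" "F \<subseteq> A" "\<forall>g\<in>F. c g \<in> Sring s" "b * f = (\<Sum>g\<in>F. c g * g)"
    using ideal_gen_mult[OF assms(1,2)] by blast
  then show ?thesis using assms(3) by (auto intro!: IP_sum)
qed

lemma IP_IXts2:
  fixes f :: "('a::field) mpoly"
  assumes "f \<in> IXts2 n es" "b \<in> Sring s"
  shows "IP (b * f)"
proof -
  have gen0: "IP (a * g)" if g_in: "g \<in> {f. \<exists>d. f \<in> Shom s d \<and> (\<forall>P\<in>torus_X n es. \<forall>v\<in>P. mpeval f v = 0)}"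
      and a_in: "a \<in> Sring s" for g a :: "'a mpoly"
  proof -
    obtain d where d: "g \<in> Shom s d" "\<forall>P\<in>torus_X n es. \<forall>v\<in>P. mpeval g v = 0" using g_in by blast
    then have "vanish n es g" unfolding vanish_def by blast
    with d(1) have "g \<in> Shom s d" "vanish n es g" by auto
    then have "g \<in> Ivan n es d" unfolding Ivan_def by simp
    then show ?thesis using IP_mult_Id a_in by blast
  qed
  have gen1: "IP (a * g)" if "g \<in> vanishing_ideal n es \<union> {Poly_Mapping.single (Poly_Mapping.single (s - 1) 2) 1}"
      "a \<in> Sring s" for g a :: "'a mpoly"
  proof (cases "g \<in> vanishing_ideal n es")
    case True
    then have "g \<in> ideal_gen s {f. \<exists>d. f \<in> Shom s d \<and> (\<forall>P\<in>torus_X n es. \<forall>v\<in>P. mpeval f v = 0)}"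
      unfolding vanishing_ideal_def .
    then show ?thesis by (rule IP_ideal_gen[OF _ that(2) gen0])
  next
    case False
    then have "g = Tp s" using that(1) Tp_eq by auto
    then show ?thesis using IP_mult_T that(2) by simp
  qed
  have "f \<in> ideal_gen s (vanishing_ideal n es \<union> {Poly_Mapping.single (Poly_Mapping.single (s - 1) 2) 1})"
    using assms(1) unfolding IXts2_def .
  then show ?thesis by (rule IP_ideal_gen[OF _ assms(2) gen1])
qed

end



lemma mdvd_refl: "mdvd m m"
  unfolding mdvd_def by simp

lemma keys_minus_sub: "ks (a - b) \<subseteq> ks (a::monom)"
  by (auto simp: in_keys_iff lookup_minus)

lemma Sring_one: "1 \<in> Sring s"
  unfolding Sring_iff by simp

context gsetup begin

lemma Id_sub_IXts2: "(g :: ('a::field) mpoly) \<in> Ivan n es d \<Longrightarrow> g \<in> IXts2 n es"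
proof -
  assume "g \<in> Ivan n es d"
  then have "g \<in> {f. \<exists>d. f \<in> Shom s d \<and> (\<forall>P\<in>torus_X n es. \<forall>v\<in>P. mpeval f v = 0)}"
    unfolding Ivan_def vanish_def by blast
  then have "g \<in> vanishing_ideal n es" unfolding vanishing_ideal_def by (rule ideal_gen_base)
  then show "g \<in> IXts2 n es" unfolding IXts2_def by (intro ideal_gen_base) simp
qed

lemma Tmult_IXts2:
  assumes "ks u \<subseteq> {..<s}"
  shows "Poly_Mapping.single u 1 * Tp s \<in> (IXts2 n es :: ('a::field) mpoly set)"
proof -
  show ?thesis unfolding IXts2_def ideal_gen_def
    by (intro CollectI exI[of _ "{Tp s}"] exI[of _ "\<lambda>_. Poly_Mapping.single u 1"])
       (auto simp: Tp_def Tm_def Sring_single assms)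
qed

lemma std_char:
  assumes m: "m \<in> Mset s d"
  shows "m \<in> std_monoms n es d TYPE('a::field) \<longleftrightarrow> m \<notin> Ls n es d TYPE('a) \<and> lk m (s - 1) < 2"
proof
  assume std: "m \<in> std_monoms n es d TYPE('a)"
  then have nd: "\<And>f. f \<in> (IXts2 n es :: 'a mpoly set) \<Longrightarrow> f \<noteq> 0 \<Longrightarrow> \<not> mdvd (lead_monom f) m"
    unfolding std_monoms_def by blast
  have "m \<notin> Ls n es d TYPE('a)"
  proof
    assume "m \<in> Ls n es d TYPE('a)"
    then obtain g :: "'a mpoly" where g: "g \<in> Ivan n es d" "g \<noteq> 0" "lead_monom g = m"
      unfolding Ls_def by blast
    show False using nd[OF Id_sub_IXts2[OF g(1)] g(2)] mdvd_refl g(3) by simp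
  qed
  moreover have "lk m (s - 1) < 2"
  proof (rule ccontr)
    assume "\<not> lk m (s - 1) < 2"
    then have dv: "mdvd (Tm s) m" unfolding mdvd_def by (auto simp: lookup_Tm)
    let ?u = "m - Tm s"
    have ku: "ks ?u \<subseteq> {..<s}" using m keys_minus_sub[of m "Tm s"] unfolding Mset_def by auto
    let ?f = "Poly_Mapping.single ?u (1::'a) * Tp s"
    have fI: "?f \<in> IXts2 n es" using Tmult_IXts2[OF ku] .
    have Tp0: "(Tp s :: 'a mpoly) \<noteq> 0"
    proof
      assume "(Tp s :: 'a mpoly) = 0"
      then have "lk (Tp s :: 'a mpoly) (Tm s) = 0" by simp
      then show False unfolding Tp_def by simp
    qed
    have "lead_monom ?f = ?u + lead_monom (Tp s :: 'a mpoly)" by (rule lead_single_mult[OF _ Tp0]) simp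
    also have "lead_monom (Tp s :: 'a mpoly) = Tm s" unfolding Tp_def by (simp add: lead_single)
    finally have lf: "lead_monom ?f = m" using add_minus_monom[OF dv] by (simp add: add.commute)
    have "ks ?f \<noteq> {}" using keys_single_mult[of 1 ?u "Tp s :: 'a mpoly"] Tp0 by simp
    then have "?f \<noteq> 0" by auto
    then show False using nd[OF fI] mdvd_refl lf by simp
  qed
  ultimately show "m \<notin> Ls n es d TYPE('a) \<and> lk m (s - 1) < 2" by blast
next
  assume h: "m \<notin> Ls n es d TYPE('a) \<and> lk m (s - 1) < 2"
  have mk: "ks m \<subseteq> {..<s}" and md: "mdeg m = d" using m unfolding Mset_def by auto
  show "m \<in> std_monoms n es d TYPE('a)"
    unfolding std_monoms_def
  proof (intro CollectI conjI mk md ballI impI)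
    fix f :: "'a mpoly" assume fI: "f \<in> IXts2 n es" and f0: "f \<noteq> 0"
    show "\<not> mdvd (lead_monom f) m"
    proof
      assume dv: "mdvd (lead_monom f) m"
      let ?u = "m - lead_monom f"
      have ku: "ks ?u \<subseteq> {..<s}" using mk keys_minus_sub[of m "lead_monom f"] by auto
      let ?b = "Poly_Mapping.single ?u (1::'a)"
      have bS: "?b \<in> Sring s" using Sring_single[OF ku] .
      have ip: "IP (?b * f)" using IP_IXts2[OF fI bS] .
      have um: "?u + lead_monom f = m" using add_minus_monom[OF dv] by (simp add: add.commute)
      have "ks (?b * f) \<noteq> {}" using keys_single_mult[of 1 ?u f] f0 by simp
      then have bf0: "?b * f \<noteq> 0" by auto
      have lbf: "lead_monom (?b * f) = m" using lead_single_mult[of 1 f ?u] f0 um by simp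
      let ?h = "hom d (?b * f)"
      have mh: "m \<in> ks ?h" using lead_in[OF bf0] lbf md by (simp add: keys_hom)
      then have h0: "?h \<noteq> 0" by auto
      have lh: "lead_monom ?h = m"
      proof (rule lead_char[OF mh], intro ballI impI)
        fix m' assume "m' \<in> ks ?h" "m' \<noteq> m"
        then show "grevlex_less m' m" using lead_max[OF bf0] lbf by (simp add: keys_hom)
      qed
      obtain g q where gq: "?h = g + Tp s * q" "g \<in> Ivan n es d"
        using ip unfolding IP_def IT_def by blast
      have gS: "g \<in> Shom s d" using gq(2) unfolding Ivan_def by simp
      have "g \<noteq> 0 \<and> lead_monom g = lead_monom ?h"
        by (rule lead_split[OF h0 gq(1) gS]) (use lh h in simp)
      then have g0: "g \<noteq> 0" and lg: "lead_monom g = m" using lh by auto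
      have "m \<in> Ls n es d TYPE('a)" unfolding Ls_def
        by (rule CollectI, rule exI[of _ g]) (use g0 lg gq(2) in auto)
      then show False using h by blast
    qed
  qed
qed

end



lemma finite_Mset: "finite (Mset s d)"
proof -
  have "inj_on (\<lambda>m. restrict (lk m) {..<s}) (Mset s d)"
  proof (rule inj_onI)
    fix a b assume a: "a \<in> Mset s d" and b: "b \<in> Mset s d"
      and eq: "restrict (lk a) {..<s} = restrict (lk b) {..<s}"
    show "a = b"
    proof (rule poly_mapping_eqI)
      fix i
      show "lk a i = lk b i"
      proof (cases "i < s")
        case True
        then show ?thesis using fun_cong[OF eq, of i] by simp
      next
        case False
        then have "i \<notin> ks a" "i \<notin> ks b" using a b unfolding Mset_def by auto
        then show ?thesis by (simp add: in_keys_iff)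
      qed
    qed
  qed
  moreover have "(\<lambda>m. restrict (lk m) {..<s}) ` Mset s d \<subseteq> PiE {..<s} (\<lambda>_. {..d})"
  proof (rule image_subsetI)
    fix m assume "m \<in> Mset s d"
    then have "mdeg m = d" unfolding Mset_def by simp
    then show "restrict (lk m) {..<s} \<in> PiE {..<s} (\<lambda>_. {..d})"
      by (subst restrict_PiE_iff) (use lookup_le_mdeg in auto)
  qed
  moreover have "finite (PiE {..<s} (\<lambda>_. {..d::nat}))" by (intro finite_PiE) auto
  ultimately show ?thesis using finite_imageD finite_subset by metis
qed

lemma monom_cancel_left[simp]: "(u + a = u + (b::monom)) \<longleftrightarrow> a = b"
proof
  assume "u + a = u + b"
  then have "\<And>i. lk (u + a) i = lk (u + b) i" by simp
  then show "a = b" by (intro poly_mapping_eqI) (simp add: lookup_add)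
qed simp

lemma monom_cancel_right[simp]: "(a + u = b + (u::monom)) \<longleftrightarrow> a = b"
  using monom_cancel_left[of u a b] by (simp add: add.commute)

lemma LsI:
  assumes "(f :: ('a::field) mpoly) \<in> Ivan n es d" "f \<noteq> 0" "lead_monom f = m"
  shows "m \<in> Ls n es d TYPE('a)"
  unfolding Ls_def by (rule CollectI, rule exI[of _ f]) (use assms in auto)

lemma LsE:
  assumes "m \<in> Ls n es d TYPE('a::field)"
  obtains f :: "('a::field) mpoly" where "f \<in> Ivan n es d" "f \<noteq> 0" "lead_monom f = m"
  using assms unfolding Ls_def by blast

lemma Mset_add_Tm: "m \<in> Mset s d \<Longrightarrow> s \<ge> 1 \<Longrightarrow> m + Tm s \<in> Mset s (d + 2)"
  unfolding Mset_def by (auto simp: keys_add_nat keys_Tm mdeg_add)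

lemma mdvd_Tm: "mdvd (Tm s) x \<longleftrightarrow> 2 \<le> lk x (s - 1)"
  unfolding mdvd_def by (auto simp: lookup_Tm)

lemma Tp_mult_lead:
  fixes g :: "('a::field) mpoly"
  assumes "g \<noteq> 0"
  shows "Tp s * g \<noteq> 0" "lead_monom (Tp s * g) = Tm s + lead_monom g"
proof -
  have "ks (Tp s * g) \<noteq> {}" unfolding Tp_def using keys_single_mult[of 1 "Tm s" g] assms by simp
  then show "Tp s * g \<noteq> 0" by auto
  show "lead_monom (Tp s * g) = Tm s + lead_monom g"
    unfolding Tp_def by (rule lead_single_mult[OF _ assms]) simp
qed

context gsetup begin

lemma shift_L:
  assumes m: "m \<in> Mset s d"
  shows "m + Tm s \<in> Ls n es (d + 2) TYPE('a::field) \<longleftrightarrow> m \<in> Ls n es d TYPE('a)"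
proof
  assume "m \<in> Ls n es d TYPE('a)"
  then obtain g :: "'a mpoly" where g: "g \<in> Ivan n es d" "g \<noteq> 0" "lead_monom g = m"
    by (rule LsE)
  have "Tp s * g \<in> Shom s (2 + d)" using Shom_mult[OF Tp_Shom] g(1) unfolding Ivan_def by auto
  moreover have "vanish n es (Tp s * g)" using g(1) vanish_Tp_mult unfolding Ivan_def by auto
  ultimately have "Tp s * g \<in> Ivan n es (d + 2)" unfolding Ivan_def by (simp add: add.commute)
  moreover have "Tp s * g \<noteq> 0" "lead_monom (Tp s * g) = m + Tm s"
    using Tp_mult_lead[OF g(2)] g(3) by (auto simp: add.commute)
  ultimately show "m + Tm s \<in> Ls n es (d + 2) TYPE('a)" by (rule LsI)
next
  assume "m + Tm s \<in> Ls n es (d + 2) TYPE('a)"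
  then obtain f :: "'a mpoly" where f: "f \<in> Ivan n es (d + 2)" "f \<noteq> 0" "lead_monom f = m + Tm s"
    by (rule LsE)
  have fS: "f \<in> Shom s (d + 2)" and fv: "vanish n es f" using f(1) unfolding Ivan_def by auto
  have big: "2 \<le> lk x (s - 1)" if "x \<in> ks f" for x
  proof -
    have "lk (lead_monom f) (s - 1) \<le> lk x (s - 1)" using gl_last[OF fS f(2) that s1] .
    moreover have "lk (lead_monom f) (s - 1) \<ge> 2" using f(3) by (simp add: lookup_add lookup_Tm)
    ultimately show ?thesis by simp
  qed
  have fin: "finite {k. lk f (Tm s + k) \<noteq> 0}"
  proof (rule finite_subset[of _ "(\<lambda>x. x - Tm s) ` ks f"])
    show "{k. lk f (Tm s + k) \<noteq> 0} \<subseteq> (\<lambda>x. x - Tm s) ` ks f"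
      by (auto simp: in_keys_iff add_minus_monom2 intro!: image_eqI)
  qed simp
  define g :: "'a mpoly" where "g = Abs_poly_mapping (\<lambda>k. lk f (Tm s + k))"
  have lg: "lk g k = lk f (Tm s + k)" for k unfolding g_def using fin by simp
  have fg: "f = Tp s * g"
  proof (rule poly_mapping_eqI)
    fix x
    show "lk f x = lk (Tp s * g) x"
    proof (cases "mdvd (Tm s) x")
      case True
      then show ?thesis unfolding Tp_def by (simp add: lookup_single_mult lg add_minus_monom)
    next
      case False
      then have "x \<notin> ks f" using big mdvd_Tm by blast
      then show ?thesis unfolding Tp_def using False by (simp add: lookup_single_mult in_keys_iff)
    qed
  qed
  have g0: "g \<noteq> 0" using fg f(2) by auto
  have gS: "g \<in> Shom s d" unfolding Shom_iff
  proof
    fix k assume "k \<in> ks g"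
    then have "Tm s + k \<in> ks f" by (simp add: in_keys_iff lg)
    then have "ks (Tm s + k) \<subseteq> {..<s}" "mdeg (Tm s + k) = d + 2" using fS unfolding Shom_iff by auto
    then show "ks k \<subseteq> {..<s} \<and> mdeg k = d" by (auto simp: keys_add_nat mdeg_add)
  qed
  have "vanish n es (Tp s * g)" using fv fg by simp
  then have "vanish n es g" using vanish_Tp_mult by blast
  then have gI: "g \<in> Ivan n es d" using gS unfolding Ivan_def by simp
  have "Tm s + lead_monom g = m + Tm s" using Tp_mult_lead(2)[OF g0] fg f(3) by simp
  then have "lead_monom g = m" by (simp add: add.commute)
  then show "m \<in> Ls n es d TYPE('a)" using gI g0 LsI by blast
qed

definition Aset :: "nat \<Rightarrow> ('a::field) itself \<Rightarrow> monom set" where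
  "Aset d T = Mset s d - Ls n es d T"

lemma beta_eq: "beta n es TYPE('a::field) d = card {m \<in> Aset d TYPE('a). lk m (s - 1) < 2}"
proof -
  have "std_monoms n es d TYPE('a) = {m \<in> Aset d TYPE('a). lk m (s - 1) < 2}"
  proof (rule set_eqI)
    fix m
    show "m \<in> std_monoms n es d TYPE('a) \<longleftrightarrow> m \<in> {m \<in> Aset d TYPE('a). lk m (s - 1) < 2}"
    proof (cases "m \<in> Mset s d")
      case True
      then show ?thesis using std_char[OF True] unfolding Aset_def by auto
    next
      case False
      then show ?thesis unfolding Aset_def std_monoms_def Mset_def by auto
    qed
  qed
  then show ?thesis unfolding beta_def by simp
qed

lemma finite_Aset: "finite (Aset d T)"
  unfolding Aset_def using finite_Mset by auto

lemma H_step: "card (Aset (d + 2) TYPE('a::field)) = beta n es TYPE('a) (d + 2) + card (Aset d TYPE('a))"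
proof -
  let ?A = "Aset (d + 2) TYPE('a)"
  have split: "?A = {m \<in> ?A. lk m (s - 1) < 2} \<union> {m \<in> ?A. 2 \<le> lk m (s - 1)}" by auto
  have "card ?A = card {m \<in> ?A. lk m (s - 1) < 2} + card {m \<in> ?A. 2 \<le> lk m (s - 1)}"
  proof -
    have fA: "finite ?A" by (rule finite_Aset)
    show ?thesis by (subst split, rule card_Un_disjoint) (use fA in auto)
  qed
  moreover have "card {m \<in> ?A. 2 \<le> lk m (s - 1)} = card (Aset d TYPE('a))"
  proof -
    have "bij_betw (\<lambda>m. m + Tm s) (Aset d TYPE('a)) {m \<in> ?A. 2 \<le> lk m (s - 1)}"
    proof (rule bij_betw_imageI)
      show "inj_on (\<lambda>m. m + Tm s) (Aset d TYPE('a))" by (rule inj_onI) simp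
      show "(\<lambda>m. m + Tm s) ` Aset d TYPE('a) = {m \<in> ?A. 2 \<le> lk m (s - 1)}"
      proof (rule set_eqI, rule iffI)
        fix x assume "x \<in> (\<lambda>m. m + Tm s) ` Aset d TYPE('a)"
        then obtain m where m: "m \<in> Aset d TYPE('a)" "x = m + Tm s" by auto
        then have mM: "m \<in> Mset s d" "m \<notin> Ls n es d TYPE('a)" unfolding Aset_def by auto
        have "x \<in> Mset s (d + 2)" using Mset_add_Tm[OF mM(1) s1] m(2) by simp
        moreover have "x \<notin> Ls n es (d + 2) TYPE('a)" using shift_L[OF mM(1), where 'a='a] mM(2) m(2) by simp
        moreover have "2 \<le> lk x (s - 1)" using m(2) by (simp add: lookup_add lookup_Tm)
        ultimately show "x \<in> {m \<in> ?A. 2 \<le> lk m (s - 1)}" unfolding Aset_def by simp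
      next
        fix x assume x: "x \<in> {m \<in> ?A. 2 \<le> lk m (s - 1)}"
        then have xM: "x \<in> Mset s (d + 2)" "x \<notin> Ls n es (d + 2) TYPE('a)" "2 \<le> lk x (s - 1)"
          unfolding Aset_def by auto
        let ?m = "x - Tm s"
        have dv: "mdvd (Tm s) x" using xM(3) mdvd_Tm by blast
        have xe: "?m + Tm s = x" using add_minus_monom[OF dv] by (simp add: add.commute)
        have "mdeg x = mdeg ?m + 2" using xe mdeg_add[of ?m "Tm s"] by simp
        then have mM: "?m \<in> Mset s d" using xM(1) keys_minus_sub[of x "Tm s"] unfolding Mset_def by auto
        have "?m \<notin> Ls n es d TYPE('a)" using shift_L[OF mM, where 'a='a] xM(2) xe by simp
        then have "?m \<in> Aset d TYPE('a)" using mM unfolding Aset_def by simp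
        then show "x \<in> (\<lambda>m. m + Tm s) ` Aset d TYPE('a)" using xe by (intro image_eqI[of _ _ ?m]) auto
      qed
    qed
    then show ?thesis by (simp add: bij_betw_same_card)
  qed
  ultimately show ?thesis using beta_eq[of "d + 2", where 'a='a] by simp
qed

lemma H_base: "d < 2 \<Longrightarrow> card (Aset d TYPE('a::field)) = beta n es TYPE('a) d"
proof -
  assume "d < 2"
  have "\<forall>m\<in>Aset d TYPE('a). lk m (s - 1) < 2"
  proof
    fix m assume "m \<in> Aset d TYPE('a)"
    then have "mdeg m = d" unfolding Aset_def Mset_def by simp
    then show "lk m (s - 1) < 2" using lookup_le_mdeg[of m "s - 1"] \<open>d < 2\<close> by simp
  qed
  then have "{m \<in> Aset d TYPE('a). lk m (s - 1) < 2} = Aset d TYPE('a)" by auto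
  then show ?thesis using beta_eq[of d, where 'a='a] by simp
qed

lemma H_sum: "card (Aset d TYPE('a::field)) = (\<Sum>i\<le>d div 2. beta n es TYPE('a) (d - 2 * i))"
proof (induction d rule: less_induct)
  case (less d)
  show ?case
  proof (cases "d < 2")
    case True
    then have "d div 2 = 0" by simp
    then show ?thesis using H_base[OF True, where 'a='a] by simp
  next
    case False
    then obtain e where e: "d = e + 2" by (metis add.commute le_Suc_ex not_less)
    have ih: "card (Aset e TYPE('a)) = (\<Sum>i\<le>e div 2. beta n es TYPE('a) (e - 2 * i))"
      using less.IH[of e] e by simp
    have dd: "d div 2 = Suc (e div 2)" using e by simp
    have "(\<Sum>i\<le>d div 2. beta n es TYPE('a) (d - 2 * i))
        = beta n es TYPE('a) d + (\<Sum>i\<le>e div 2. beta n es TYPE('a) (d - 2 * Suc i))"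
      unfolding dd sum.atMost_Suc_shift by simp
    also have "(\<Sum>i\<le>e div 2. beta n es TYPE('a) (d - 2 * Suc i)) = (\<Sum>i\<le>e div 2. beta n es TYPE('a) (e - 2 * i))"
      using e by (intro sum.cong) auto
    finally show ?thesis using H_step[of e, where 'a='a] ih e by simp
  qed
qed

end



lemma vs_fun: "vector_space (\<lambda>c (f :: 'b \<Rightarrow> 'a::field) x. c * f x)"
  by unfold_locales (auto simp: fun_eq_iff algebra_simps)

lemma Id_diff: "f \<in> Ivan n es d \<Longrightarrow> g \<in> Ivan n es d \<Longrightarrow> f - g \<in> Ivan n es d"
  unfolding Ivan_def by (simp add: Shom_diff vanish_diff)

lemma scal_Shom: "Poly_Mapping.single 0 c \<in> Shom s 0"
  by (rule Shom_single) auto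

context gsetup begin

definition E :: "nat \<Rightarrow> ('a::field) mpoly \<Rightarrow> (nat \<Rightarrow> 'a) set \<Rightarrow> 'a" where
  "E d f = (\<lambda>P. if P \<in> torus_X n es then mpeval f (rep P) / (rep P 0) ^ d else 0)"

lemma param_code_E: "param_code n es d = E d ` Shom s d"
  unfolding param_code_def E_def by auto

lemma E_add: "E d (f + g) = E d f + E d g"
  unfolding E_def by (auto simp: fun_eq_iff mpeval_add add_divide_distrib)

lemma E_zero: "E d 0 = 0"
  unfolding E_def by (auto simp: fun_eq_iff)

lemma E_diff: "E d (f - g) = E d f - E d g"
  unfolding E_def by (auto simp: fun_eq_iff mpeval_diff diff_divide_distrib)

lemma E_sum: "E d (\<Sum>i\<in>I. p i) = (\<Sum>i\<in>I. E d (p i))"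
  by (induction I rule: infinite_finite_induct) (simp_all add: E_add E_zero)

lemma E_single: "E d (Poly_Mapping.single m c) = (\<lambda>P. c * E d (Poly_Mapping.single m 1) P)"
  unfolding E_def by (auto simp: fun_eq_iff mpeval_single)

lemma E_zero_iff:
  assumes "(f :: ('a::field) mpoly) \<in> Shom s d"
  shows "E d f = 0 \<longleftrightarrow> vanish n es f"
proof -
  have "E d f = 0 \<longleftrightarrow> (\<forall>P\<in>torus_X n es. mpeval f (rep P) = 0)"
  proof
    assume h: "E d f = 0"
    show "\<forall>P\<in>torus_X n es. mpeval f (rep P) = 0"
    proof
      fix P :: "(nat \<Rightarrow> 'a) set" assume P: "P \<in> torus_X n es"
      have "rep P 0 \<noteq> 0" using rep_nz(1)[OF P, of 0] s1 by (cases es) auto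
      moreover have "mpeval f (rep P) / (rep P 0) ^ d = 0" using fun_cong[OF h, of P] P unfolding E_def by simp
      ultimately show "mpeval f (rep P) = 0" by simp
    qed
  next
    assume "\<forall>P\<in>torus_X n es. mpeval f (rep P) = 0"
    then show "E d f = 0" unfolding E_def by (auto simp: fun_eq_iff)
  qed
  then show ?thesis using vanish_iff_rep[OF assms] by simp
qed

lemma no_std_Id:
  assumes "(p :: ('a::field) mpoly) \<in> Ivan n es d" "ks p \<subseteq> Aset d TYPE('a)"
  shows "p = 0"
proof (rule ccontr)
  assume p0: "p \<noteq> 0"
  have "lead_monom p \<in> Ls n es d TYPE('a)" using LsI[OF assms(1) p0] by simp
  moreover have "lead_monom p \<in> Aset d TYPE('a)" using lead_in[OF p0] assms(2) by auto
  ultimately show False unfolding Aset_def by simp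
qed

lemma Aset_Mset: "m \<in> Aset d T \<Longrightarrow> m \<in> Mset s d"
  unfolding Aset_def by simp

lemma single_Shom_A: "m \<in> Aset d T \<Longrightarrow> Poly_Mapping.single m c \<in> Shom s d"
  using Aset_Mset unfolding Mset_def by (intro Shom_single) auto

lemma reduce:
  fixes f :: "('a::field) mpoly"
  shows "f \<in> Shom s d \<Longrightarrow> \<exists>g. g \<in> Shom s d \<and> ks g \<subseteq> Aset d TYPE('a) \<and> f - g \<in> Ivan n es d"
proof (induction "card {m' \<in> Mset s d. \<exists>x\<in>ks f - Aset d TYPE('a). m' = x \<or> grevlex_less m' x}" arbitrary: f rule: less_induct)
  case less
  let ?A = "Aset d TYPE('a)"
  let ?D = "\<lambda>f :: 'a mpoly. {m' \<in> Mset s d. \<exists>x\<in>ks f - ?A. m' = x \<or> grevlex_less m' x}"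
  show ?case
  proof (cases "ks f \<subseteq> ?A")
    case True
    then show ?thesis using less.prems by (intro exI[of _ f]) simp
  next
    case False
    then have ne: "ks f - ?A \<noteq> {}" by auto
    obtain m where m: "m \<in> ks f - ?A" "\<forall>m'\<in>ks f - ?A. m' \<noteq> m \<longrightarrow> grevlex_less m' m"
      using finite_max_exists[of "ks f - ?A"] ne by auto
    have mM: "m \<in> Mset s d" using m(1) less.prems unfolding Shom_iff Mset_def by auto
    then have "m \<in> Ls n es d TYPE('a)" using m(1) unfolding Aset_def by auto
    then obtain h :: "'a mpoly" where h: "h \<in> Ivan n es d" "h \<noteq> 0" "lead_monom h = m" by (rule LsE)
    have hm: "lk h m \<noteq> 0" using lead_in[OF h(2)] h(3) by (simp add: in_keys_iff)
    define c where "c = lk f m / lk h m"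
    define f' where "f' = f - Poly_Mapping.single 0 c * h"
    have hS: "h \<in> Shom s d" using h(1) unfolding Ivan_def by simp
    have ch: "Poly_Mapping.single 0 c * h \<in> Ivan n es d"
      using Shom_mult[OF scal_Shom hS] vanish_mult h(1) unfolding Ivan_def by auto
    have f'S: "f' \<in> Shom s d" unfolding f'_def using Shom_diff[OF less.prems] ch unfolding Ivan_def by auto
    have lkf'm: "lk f' m = 0" unfolding f'_def c_def using hm by (simp add: lookup_minus lookup_scal)
    have sub: "ks f' - ?A \<subseteq> {x. grevlex_less x m}"
    proof
      fix x assume x: "x \<in> ks f' - ?A"
      then have xm: "x \<noteq> m" using lkf'm by (auto simp: in_keys_iff)
      have "ks f' \<subseteq> ks f \<union> ks h" unfolding f'_def
        using keys_add[of f "- (Poly_Mapping.single 0 c * h)"] by (auto simp: in_keys_iff lookup_scal)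
      then consider "x \<in> ks f - ?A" | "x \<in> ks h" using x by auto
      then show "x \<in> {x. grevlex_less x m}"
      proof cases
        case 1 then show ?thesis using m(2) xm by auto
      next
        case 2 then show ?thesis using lead_max[OF h(2)] h(3) xm by auto
      qed
    qed
    have Dsub: "?D f' \<subseteq> {m' \<in> Mset s d. grevlex_less m' m}"
      using sub gl_trans by blast
    have Dsub2: "{m' \<in> Mset s d. grevlex_less m' m} \<subset> ?D f"
    proof
      show "{m' \<in> Mset s d. grevlex_less m' m} \<subseteq> ?D f" using m(1) by blast
      show "{m' \<in> Mset s d. grevlex_less m' m} \<noteq> ?D f" using m(1) mM gl_irrefl by blast
    qed
    have finD: "finite (?D f)" by (rule finite_subset[OF _ finite_Mset[of s d]]) blast
    have finG: "finite {m' \<in> Mset s d. grevlex_less m' m}" by (rule finite_subset[OF _ finite_Mset[of s d]]) blast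
    have "card (?D f') \<le> card {m' \<in> Mset s d. grevlex_less m' m}" by (rule card_mono[OF finG Dsub])
    also have "\<dots> < card (?D f)" by (rule psubset_card_mono[OF finD Dsub2])
    finally have "card (?D f') < card (?D f)" .
    then obtain g where g: "g \<in> Shom s d" "ks g \<subseteq> ?A" "f' - g \<in> Ivan n es d"
      using less.hyps[OF _ f'S] by blast
    have eq: "f - g = (f' - g) + Poly_Mapping.single 0 c * h" unfolding f'_def by simp
    have "f - g \<in> Ivan n es d" unfolding eq by (rule Id_add[OF g(3) ch])
    then show ?thesis using g by blast
  qed
qed

end



context gsetup begin

lemma dim_eq:
  "fdim (param_code n es d :: ((nat \<Rightarrow> 'a::field) set \<Rightarrow> 'a) set) = card (Aset d TYPE('a))"
proof -
  interpret VS: vector_space "\<lambda>c (f :: (nat \<Rightarrow> 'a) set \<Rightarrow> 'a) x. c * f x" by (rule vs_fun)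
  let ?A = "Aset d TYPE('a)"
  define Em where "Em m = E d (Poly_Mapping.single m (1::'a))" for m
  have finA: "finite ?A" by (rule finite_Aset)
  have inj: "inj_on Em ?A"
  proof (rule inj_onI)
    fix m1 m2 assume m1: "m1 \<in> ?A" and m2: "m2 \<in> ?A" and eq: "Em m1 = Em m2"
    let ?p = "Poly_Mapping.single m1 (1::'a) - Poly_Mapping.single m2 1"
    have pS: "?p \<in> Shom s d" using single_Shom_A[OF m1] single_Shom_A[OF m2] by (rule Shom_diff)
    have "E d ?p = 0" using eq unfolding Em_def by (simp add: E_diff)
    then have "vanish n es ?p" using E_zero_iff[OF pS] by simp
    then have pI: "?p \<in> Ivan n es d" using pS unfolding Ivan_def by simp
    have "ks ?p \<subseteq> {m1, m2}" using keys_add[of "Poly_Mapping.single m1 (1::'a)" "- Poly_Mapping.single m2 1"]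
      by (auto simp: in_keys_iff)
    then have "ks ?p \<subseteq> ?A" using m1 m2 by auto
    then have "?p = 0" using no_std_Id[OF pI] by simp
    then have "lk ?p m1 = 0" by simp
    then show "m1 = m2" by (simp add: lookup_minus lookup_single when_def split: if_splits)
  qed
  have indep: "VS.independent (Em ` ?A)"
  proof (rule VS.independent_if_scalars_zero)
    show "finite (Em ` ?A)" using finA by simp
  next
    fix u x
    assume su: "(\<Sum>x\<in>Em ` ?A. (\<lambda>xa. u x * x xa)) = 0" and x: "x \<in> Em ` ?A"
    define p where "p = (\<Sum>m\<in>?A. Poly_Mapping.single m (u (Em m)))"
    have "E d p = (\<Sum>m\<in>?A. (\<lambda>P. u (Em m) * Em m P))"
      unfolding p_def E_sum Em_def by (subst E_single) simp
    also have "\<dots> = (\<Sum>x\<in>Em ` ?A. (\<lambda>P. u x * x P))"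
      by (simp add: sum.reindex[OF inj])
    finally have Ep: "E d p = 0" using su by simp
    have pS: "p \<in> Shom s d" unfolding p_def by (rule Shom_sum) (rule single_Shom_A)
    have "vanish n es p" using E_zero_iff[OF pS] Ep by simp
    then have pI: "p \<in> Ivan n es d" using pS unfolding Ivan_def by simp
    have "ks p \<subseteq> ?A" unfolding p_def using keys_sum[of "\<lambda>m. Poly_Mapping.single m (u (Em m))" ?A]
      by (auto split: if_splits)
    then have p0: "p = 0" using no_std_Id[OF pI] by simp
    obtain m where m: "m \<in> ?A" "x = Em m" using x by auto
    have "lk p m = u (Em m)" unfolding p_def lookup_sum
      using finA m(1) by (simp add: lookup_single when_def)
    then show "u x = 0" using p0 m by simp
  qed
  have sub: "Em ` ?A \<subseteq> param_code n es d"
    unfolding param_code_E Em_def using single_Shom_A by blast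
  have spn: "param_code n es d \<subseteq> VS.span (Em ` ?A)"
  proof
    fix y assume "y \<in> (param_code n es d :: ((nat \<Rightarrow> 'a) set \<Rightarrow> 'a) set)"
    then obtain f :: "'a mpoly" where f: "f \<in> Shom s d" "y = E d f" unfolding param_code_E by auto
    obtain g where g: "g \<in> Shom s d" "ks g \<subseteq> ?A" "f - g \<in> Ivan n es d" using reduce[OF f(1)] by blast
    have "E d (f - g) = 0" using g(3) E_zero_iff[OF Shom_diff[OF f(1) g(1)]] unfolding Ivan_def by simp
    then have yg: "y = E d g" using f(2) by (simp add: E_diff)
    have "E d g = (\<Sum>m\<in>ks g. (\<lambda>P. lk g m * Em m P))"
      unfolding Em_def by (subst poly_expand[of g]) (simp add: E_sum E_single[of d _ "lk g _"])
    also have "\<dots> \<in> VS.span (Em ` ?A)"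
    proof (rule VS.span_sum)
      fix m assume "m \<in> ks g"
      then have "Em m \<in> VS.span (Em ` ?A)" using g(2) by (intro VS.span_base) auto
      then show "(\<lambda>P. lk g m * Em m P) \<in> VS.span (Em ` ?A)" using VS.span_scale by simp
    qed
    finally show "y \<in> VS.span (Em ` ?A)" using yg by simp
  qed
  have "card (Em ` ?A) = VS.dim (param_code n es d)"
    by (rule VS.basis_card_eq_dim[OF sub spn indep])
  moreover have "card (Em ` ?A) = card ?A" using card_image[OF inj] .
  ultimately show ?thesis unfolding fdim_def by simp
qed

end

theorem proposition2p2:
  fixes n :: nat and es :: "nat set list" and d :: nat
  assumes "card (UNIV :: 'a set) = 3"
    and "simple_graph n es"
    and "length es \<ge> 1"
  shows "fdim (param_code n es d :: ((nat \<Rightarrow> 'a::{field,finite}) set \<Rightarrow> 'a) set)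
         = (\<Sum>i\<le>d div 2. beta n es TYPE('a) (d - 2 * i))"
proof -
  interpret gsetup n es using assms(2,3) by unfold_locales
  show ?thesis using dim_eq[of d, where 'a='a] H_sum[of d, where 'a='a] by simp
qed

end
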